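(* Let $\Phi=\forall u_1\ldots\forall u_n\exists e_1(D_1)\ldots\exists e_m(D_m).\varphi$ be a DQBF with existential variables $E$, and let $<_E$ be a linear ordering of $E$. Then $\Phi$ is true if and only if for each $e\in E$ there is a propositional formula $\psi_e$ with $\mathit{var}(\psi_e)\subseteq D(e)\cup\{x\in E\mid D(x)\subseteq D(e),\ x<_E e\}$ such that $\neg\varphi\wedge\bigwedge_{e\in E}(e\leftrightarrow\psi_e)$ is unsatisfiable.
   Context: For a set $V$ of variables, $[V]$ is the set of all assignments $V\to\{\textsc{true},\textsc{false}\}$, and $\sigma|_W$ denotes restriction. A DQBF in prenex CNF is $\Phi=\forall u_1\ldots\forall u_n\exists e_1(D_1)\ldots\exists e_m(D_m).\varphi$ where all $u_i,e_j$ are pairwise distinct variables, $U=\{u_1,\dots,u_n\}$, $E=\{e_1,\dots,e_m\}$, each $D_j\subseteq U$ is the dependency set $D(e_j)$, and $\varphi$ is a CNF with $\mathit{var}(\varphi)\subseteq U\cup E$. A model of $\Phi$ is a family $F=(f_e)_{e\in E}$ of functions $f_e:[D(e)]\to\{\textsc{true},\textsc{false}\}$ such that for every $\sigma\in[U]$ the assignment $\sigma\cup F(\sigma)$ satisfies $\varphi$, where $F(\sigma)$ assigns each $e\in E$ the value $f_e(\sigma|_{D(e)})$. $\Phi$ is true if it has a model and false otherwise. *)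

theory Defs
  imports Main
begin

(* Literals: (v, True) is the positive literal v, (v, False) is \<not>v.
   A clause is a finite set of literals, a CNF a finite set of clauses. *)
type_synonym 'v lit = "'v \<times> bool"
type_synonym 'v clause = "'v lit set"
type_synonym 'v cnf = "'v clause set"

definition lit_sat :: "('v \<Rightarrow> bool) \<Rightarrow> 'v lit \<Rightarrow> bool" where
  "lit_sat \<alpha> l \<longleftrightarrow> \<alpha> (fst l) = snd l"

definition cnf_sat :: "('v \<Rightarrow> bool) \<Rightarrow> 'v cnf \<Rightarrow> bool" where
  "cnf_sat \<alpha> \<phi> \<longleftrightarrow> (\<forall>C\<in>\<phi>. \<exists>l\<in>C. lit_sat \<alpha> l)"

definition cnf_vars :: "'v cnf \<Rightarrow> 'v set" where
  "cnf_vars \<phi> = (\<Union>C\<in>\<phi>. fst ` C)"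

datatype 'v pform = PVar 'v | PTrue | PFalse | PNot "'v pform"
  | PAnd "'v pform" "'v pform" | POr "'v pform" "'v pform"

primrec peval :: "('v \<Rightarrow> bool) \<Rightarrow> 'v pform \<Rightarrow> bool" where
  "peval \<alpha> (PVar v) = \<alpha> v"
| "peval \<alpha> PTrue = True"
| "peval \<alpha> PFalse = False"
| "peval \<alpha> (PNot f) = (\<not> peval \<alpha> f)"
| "peval \<alpha> (PAnd f g) = (peval \<alpha> f \<and> peval \<alpha> g)"
| "peval \<alpha> (POr f g) = (peval \<alpha> f \<or> peval \<alpha> g)"

primrec pvars :: "'v pform \<Rightarrow> 'v set" where
  "pvars (PVar v) = {v}"
| "pvars PTrue = {}"
| "pvars PFalse = {}"
| "pvars (PNot f) = pvars f"
| "pvars (PAnd f g) = pvars f \<union> pvars g"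
| "pvars (POr f g) = pvars f \<union> pvars g"

(* A DQBF  \<forall>U \<exists>e(D e)_{e\<in>E}. \<phi>  with finite pairwise distinct variables *)
definition wf_dqbf :: "'v set \<Rightarrow> 'v set \<Rightarrow> ('v \<Rightarrow> 'v set) \<Rightarrow> 'v cnf \<Rightarrow> bool" where
  "wf_dqbf U E D \<phi> \<longleftrightarrow> finite U \<and> finite E \<and> U \<inter> E = {} \<and>
     (\<forall>e\<in>E. D e \<subseteq> U) \<and> finite \<phi> \<and> (\<forall>C\<in>\<phi>. finite C) \<and> cnf_vars \<phi> \<subseteq> U \<union> E"

(* A model: for each e\<in>E a function f_e of assignments that depends only on
   the restriction to D(e) (i.e. a function [D(e)] \<rightarrow> bool). *)
definition is_model ::
  "'v set \<Rightarrow> 'v set \<Rightarrow> ('v \<Rightarrow> 'v set) \<Rightarrow> 'v cnf \<Rightarrow> ('v \<Rightarrow> ('v \<Rightarrow> bool) \<Rightarrow> bool) \<Rightarrow> bool" where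
  "is_model U E D \<phi> F \<longleftrightarrow>
     (\<forall>e\<in>E. \<forall>\<sigma> \<sigma>'. (\<forall>u\<in>D e. \<sigma> u = \<sigma>' u) \<longrightarrow> F e \<sigma> = F e \<sigma>') \<and>
     (\<forall>\<sigma>. cnf_sat (\<lambda>v. if v \<in> E then F v \<sigma> else \<sigma> v) \<phi>)"

definition dqbf_true :: "'v set \<Rightarrow> 'v set \<Rightarrow> ('v \<Rightarrow> 'v set) \<Rightarrow> 'v cnf \<Rightarrow> bool" where
  "dqbf_true U E D \<phi> \<longleftrightarrow> (\<exists>F. is_model U E D \<phi> F)"

end

theory Submission
  imports Defs
begin

lemma peval_cong: "(\<forall>v\<in>pvars f. \<alpha> v = \<beta> v) \<Longrightarrow> peval \<alpha> f = peval \<beta> f"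
  by (induction f) auto

lemma represent:
  assumes "finite S"
  shows "(\<forall>\<sigma> \<sigma>'. (\<forall>u\<in>S. \<sigma> u = \<sigma>' u) \<longrightarrow> g \<sigma> = g \<sigma>') \<Longrightarrow>
         \<exists>\<psi>. pvars \<psi> \<subseteq> S \<and> (\<forall>\<alpha>. peval \<alpha> \<psi> = g \<alpha>)"
  using assms
proof (induction S arbitrary: g rule: finite_induct)
  case empty
  then obtain b where c: "\<And>\<alpha>. g \<alpha> = b" by blast
  show ?case
  proof (cases b)
    case True
    then show ?thesis using c by (intro exI[of _ PTrue]) auto
  next
    case False
    then show ?thesis using c by (intro exI[of _ PFalse]) auto
  qed
next
  case (insert x S)
  define g1 where "g1 = (\<lambda>\<alpha>. g (\<alpha>(x:=True)))"
  define g0 where "g0 = (\<lambda>\<alpha>. g (\<alpha>(x:=False)))"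
  have "\<forall>\<sigma> \<sigma>'. (\<forall>u\<in>S. \<sigma> u = \<sigma>' u) \<longrightarrow> g1 \<sigma> = g1 \<sigma>'"
      proof (intro allI impI)
    fix \<sigma> \<sigma>' :: "'a \<Rightarrow> bool" assume "\<forall>u\<in>S. \<sigma> u = \<sigma>' u"
    then have "\<forall>u\<in>insert x S. (\<sigma>(x:=True)) u = (\<sigma>'(x:=True)) u" by simp
    then show "g1 \<sigma> = g1 \<sigma>'" unfolding g1_def using insert.prems by blast
  qed
  then obtain p1 where p1: "pvars p1 \<subseteq> S" "\<forall>\<alpha>. peval \<alpha> p1 = g1 \<alpha>" using insert.IH by blast
  have "\<forall>\<sigma> \<sigma>'. (\<forall>u\<in>S. \<sigma> u = \<sigma>' u) \<longrightarrow> g0 \<sigma> = g0 \<sigma>'"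
      proof (intro allI impI)
    fix \<sigma> \<sigma>' :: "'a \<Rightarrow> bool" assume "\<forall>u\<in>S. \<sigma> u = \<sigma>' u"
    then have "\<forall>u\<in>insert x S. (\<sigma>(x:=False)) u = (\<sigma>'(x:=False)) u" by simp
    then show "g0 \<sigma> = g0 \<sigma>'" unfolding g0_def using insert.prems by blast
  qed
  then obtain p0 where p0: "pvars p0 \<subseteq> S" "\<forall>\<alpha>. peval \<alpha> p0 = g0 \<alpha>" using insert.IH by blast
  show ?case
  proof (intro exI[of _ "POr (PAnd (PVar x) p1) (PAnd (PNot (PVar x)) p0)"] conjI allI)
    show "pvars (POr (PAnd (PVar x) p1) (PAnd (PNot (PVar x)) p0)) \<subseteq> insert x S"
      using p0 p1 by auto
  next
    fix \<alpha>
    have a1: "\<alpha> x \<Longrightarrow> \<alpha>(x:=True) = \<alpha>" by (rule ext) simp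
    have a0: "\<not> \<alpha> x \<Longrightarrow> \<alpha>(x:=False) = \<alpha>" by (rule ext) simp
    show "peval \<alpha> (POr (PAnd (PVar x) p1) (PAnd (PNot (PVar x)) p0)) = g \<alpha>"
      using p0 p1 a1 a0 by (cases "\<alpha> x") (auto simp: g1_def g0_def)
  qed
qed

primrec itr :: "('v \<Rightarrow> bool) \<Rightarrow> 'v set \<Rightarrow> ('v \<Rightarrow> 'v pform) \<Rightarrow> nat \<Rightarrow> ('v \<Rightarrow> bool)" where
  "itr \<sigma> E \<psi> 0 = \<sigma>"
| "itr \<sigma> E \<psi> (Suc k) = (\<lambda>v. if v \<in> E then peval (itr \<sigma> E \<psi> k) (\<psi> v) else \<sigma> v)"

lemma itr_out: "v \<notin> E \<Longrightarrow> itr \<sigma> E \<psi> k v = \<sigma> v"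
  by (cases k) auto

theorem lemma3:
  fixes U E :: "'v set" and D :: "'v \<Rightarrow> 'v set" and \<phi> :: "'v cnf"
    and lt :: "'v rel"
  assumes "wf_dqbf U E D \<phi>"
    and "strict_linear_order_on E lt"
    and "lt \<subseteq> E \<times> E"
  shows "dqbf_true U E D \<phi> \<longleftrightarrow>
    (\<exists>\<psi> :: 'v \<Rightarrow> 'v pform.
       (\<forall>e\<in>E. pvars (\<psi> e) \<subseteq> D e \<union> {x \<in> E. D x \<subseteq> D e \<and> (x, e) \<in> lt}) \<and>
       \<not> (\<exists>\<alpha>. \<not> cnf_sat \<alpha> \<phi> \<and> (\<forall>e\<in>E. \<alpha> e = peval \<alpha> (\<psi> e))))"
proof
  assume "dqbf_true U E D \<phi>"
  then obtain F where F: "is_model U E D \<phi> F" unfolding dqbf_true_def by blast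
  have "\<forall>e\<in>E. \<exists>p. pvars p \<subseteq> D e \<and> (\<forall>\<alpha>. peval \<alpha> p = F e \<alpha>)"
  proof
    fix e assume e: "e \<in> E"
    have "finite (D e)" using assms(1) e unfolding wf_dqbf_def by (meson finite_subset)
    then show "\<exists>p. pvars p \<subseteq> D e \<and> (\<forall>\<alpha>. peval \<alpha> p = F e \<alpha>)"
      using represent[of "D e" "F e"] F e unfolding is_model_def by blast
  qed
  then obtain \<psi> where \<psi>: "\<forall>e\<in>E. pvars (\<psi> e) \<subseteq> D e \<and> (\<forall>\<alpha>. peval \<alpha> (\<psi> e) = F e \<alpha>)"
    by metis
  show "\<exists>\<psi> :: 'v \<Rightarrow> 'v pform.
       (\<forall>e\<in>E. pvars (\<psi> e) \<subseteq> D e \<union> {x \<in> E. D x \<subseteq> D e \<and> (x, e) \<in> lt}) \<and>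
       \<not> (\<exists>\<alpha>. \<not> cnf_sat \<alpha> \<phi> \<and> (\<forall>e\<in>E. \<alpha> e = peval \<alpha> (\<psi> e)))"
  proof (intro exI[of _ \<psi>] conjI notI)
    show "\<forall>e\<in>E. pvars (\<psi> e) \<subseteq> D e \<union> {x \<in> E. D x \<subseteq> D e \<and> (x, e) \<in> lt}" using \<psi> by blast
  next
    assume "\<exists>\<alpha>. \<not> cnf_sat \<alpha> \<phi> \<and> (\<forall>e\<in>E. \<alpha> e = peval \<alpha> (\<psi> e))"
    then obtain \<alpha> where a: "\<not> cnf_sat \<alpha> \<phi>" "\<forall>e\<in>E. \<alpha> e = peval \<alpha> (\<psi> e)" by blast
    have "(\<lambda>v. if v \<in> E then F v \<alpha> else \<alpha> v) = \<alpha>" using a(2) \<psi> by auto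
    then show False using F a(1) unfolding is_model_def by metis
  qed
next
  assume "\<exists>\<psi> :: 'v \<Rightarrow> 'v pform.
       (\<forall>e\<in>E. pvars (\<psi> e) \<subseteq> D e \<union> {x \<in> E. D x \<subseteq> D e \<and> (x, e) \<in> lt}) \<and>
       \<not> (\<exists>\<alpha>. \<not> cnf_sat \<alpha> \<phi> \<and> (\<forall>e\<in>E. \<alpha> e = peval \<alpha> (\<psi> e)))"
  then obtain \<psi> where pv: "\<forall>e\<in>E. pvars (\<psi> e) \<subseteq> D e \<union> {x \<in> E. D x \<subseteq> D e \<and> (x, e) \<in> lt}"
    and uns: "\<And>\<alpha>. (\<forall>e\<in>E. \<alpha> e = peval \<alpha> (\<psi> e)) \<Longrightarrow> cnf_sat \<alpha> \<phi>" by blast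
  have finE: "finite E" and disj: "U \<inter> E = {}" and DU: "\<forall>e\<in>E. D e \<subseteq> U"
    using assms(1) unfolding wf_dqbf_def by auto
  have tr: "trans lt" and irr: "\<And>x. (x, x) \<notin> lt"
    using assms(2) unfolding strict_linear_order_on_def irrefl_on_def by auto
  define rk where "rk = (\<lambda>e. card {y. (y, e) \<in> lt})"
  have rk_lt: "rk x < rk e" if "(x, e) \<in> lt" for x e
  proof -
    have "{y. (y, e) \<in> lt} \<subseteq> E" using assms(3) by auto
    then have f: "finite {y. (y, e) \<in> lt}" using finE finite_subset by blast
    have "{y. (y, x) \<in> lt} \<subset> {y. (y, e) \<in> lt}"
      using that tr irr unfolding trans_def by blast
    then show ?thesis unfolding rk_def using f psubset_card_mono by blast
  qed
  have rk_E: "rk e < card E" if "e \<in> E" for e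
  proof -
    have "{y. (y, e) \<in> lt} \<subset> E" using assms(3) that irr by auto
    then show ?thesis unfolding rk_def using finE psubset_card_mono by blast
  qed
  have stab: "\<forall>e\<in>E. rk e < k \<longrightarrow> itr (\<sigma>::'v\<Rightarrow>bool) E \<psi> k e = itr \<sigma> E \<psi> (Suc k) e" for \<sigma> k
  proof (induction k)
    case 0
    then show ?case by simp
  next
    case (Suc k)
    show ?case
    proof (intro ballI impI)
      fix e assume e: "e \<in> E" "rk e < Suc k"
      have "peval (itr \<sigma> E \<psi> k) (\<psi> e) = peval (itr \<sigma> E \<psi> (Suc k)) (\<psi> e)"
      proof (rule peval_cong, intro ballI)
        fix v assume v: "v \<in> pvars (\<psi> e)"
        show "itr \<sigma> E \<psi> k v = itr \<sigma> E \<psi> (Suc k) v"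
        proof (cases "v \<in> E")
          case True
          then have "(v, e) \<in> lt" using pv e v DU disj by blast
          then have "rk v < k" using rk_lt e by fastforce
          then show ?thesis using Suc.IH True by blast
        next
          case False
          then show ?thesis by (simp add: itr_out)
        qed
      qed
      then show "itr \<sigma> E \<psi> (Suc k) e = itr \<sigma> E \<psi> (Suc (Suc k)) e" using e by simp
    qed
  qed
  define B where "B = (\<lambda>\<sigma>. itr \<sigma> E \<psi> (card E))"
  have Bfix: "\<forall>e\<in>E. B (\<sigma>::'v\<Rightarrow>bool) e = peval (B \<sigma>) (\<psi> e)" for \<sigma>
  proof
    fix e assume e: "e \<in> E"
    have "B \<sigma> e = itr \<sigma> E \<psi> (Suc (card E)) e" unfolding B_def using stab rk_E e by blast
    then show "B \<sigma> e = peval (B \<sigma>) (\<psi> e)" using e unfolding B_def by simp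
  qed
  have Bout: "v \<notin> E \<Longrightarrow> B (\<sigma>::'v\<Rightarrow>bool) v = \<sigma> v" for \<sigma> v unfolding B_def by (simp add: itr_out)
  have wflt: "wf lt"
  proof (rule finite_acyclic_wf)
    show "finite lt" using assms(3) finE finite_subset by blast
    show "acyclic lt" using tr irr by (simp add: acyclic_irrefl irrefl_on_def)
  qed
  have dep: "\<forall>(\<sigma>::'v\<Rightarrow>bool) \<sigma>'. (\<forall>u\<in>D e. \<sigma> u = \<sigma>' u) \<longrightarrow> B \<sigma> e = B \<sigma>' e" if "e \<in> E" for e
    using that
  proof (induction e rule: wf_induct_rule[OF wflt])
    case (1 e)
    show ?case
    proof (intro allI impI)
      fix \<sigma> \<sigma>' :: "'v \<Rightarrow> bool" assume ag: "\<forall>u\<in>D e. \<sigma> u = \<sigma>' u"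
      have "peval (B \<sigma>) (\<psi> e) = peval (B \<sigma>') (\<psi> e)"
      proof (rule peval_cong, intro ballI)
        fix v assume v: "v \<in> pvars (\<psi> e)"
        show "B \<sigma> v = B \<sigma>' v"
        proof (cases "v \<in> E")
          case True
          then have "(v, e) \<in> lt" "D v \<subseteq> D e" using pv 1 v DU disj by blast+
          then show ?thesis using 1 True ag by blast
        next
          case False
          then have "v \<in> D e" using pv 1 v by blast
          then show ?thesis using False ag Bout by simp
        qed
      qed
      then show "B \<sigma> e = B \<sigma>' e" using Bfix 1 by metis
    qed
  qed
  have "is_model U E D \<phi> (\<lambda>e \<sigma>. B \<sigma> e)"
    unfolding is_model_def
  proof (intro conjI ballI allI)
    show "\<And>e \<sigma> \<sigma>'. e \<in> E \<Longrightarrow> (\<forall>u\<in>D e. \<sigma> u = \<sigma>' u) \<longrightarrow> B \<sigma> e = B \<sigma>' e" using dep by blast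
  next
    fix \<sigma> :: "'v \<Rightarrow> bool"
    have "(\<lambda>v. if v \<in> E then B \<sigma> v else \<sigma> v) = B \<sigma>" using Bout by auto
    then show "cnf_sat (\<lambda>v. if v \<in> E then B \<sigma> v else \<sigma> v) \<phi>" using uns Bfix by metis
  qed
  then show "dqbf_true U E D \<phi>" unfolding dqbf_true_def by blast
qed

end
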